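(* Let $f\in K[z]$ be a polynomial of degree at least $2$. If $f$ has no wandering points in $J(f)\cap\mathsf{H}^1$, then every point of $J(f)\cap\mathsf{H}^1$ is eventually mapped to a repelling cycle.
   Context: $K$ is an algebraically closed field of characteristic $0$, complete with respect to a nontrivial nonarchimedean absolute value. $\mathsf{P}^1$ is the Berkovich projective line over $K$, $\mathsf{A}^1=\mathsf{P}^1\setminus\{\infty\}$, and $\mathsf{H}^1=\mathsf{P}^1\setminus(K\cup\{\infty\})$ (non-classical points). A polynomial extends continuously to $\mathsf{P}^1$; $\deg_\xi f$ is the local degree. $\mathcal{K}(f)$ is the set of $\xi\in\mathsf{A}^1$ with $f^n(\xi)\not\to\infty$, and $J(f)=\partial\mathcal{K}(f)$. A point of $J(f)\cap\mathsf{H}^1$ is wandering if it is not eventually periodic. A periodic point $\xi\in\mathsf{H}^1$ of period $m$ (and its cycle) is repelling if $\deg_\xi f^m>1$ and indifferent if $\deg_\xi f^m=1$. *)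

theory Defs
  imports "HOL-Analysis.Analysis" "HOL-Computational_Algebra.Polynomial"
begin

definition nonarch_abs :: "('k::field \<Rightarrow> real) \<Rightarrow> bool" where
  "nonarch_abs absv \<longleftrightarrow>
     (\<forall>x. absv x \<ge> 0) \<and> (\<forall>x. absv x = 0 \<longleftrightarrow> x = 0) \<and>
     (\<forall>x y. absv (x * y) = absv x * absv y) \<and>
     (\<forall>x y. absv (x + y) \<le> max (absv x) (absv y))"

definition nontrivial_abs :: "('k::field \<Rightarrow> real) \<Rightarrow> bool" where
  "nontrivial_abs absv \<longleftrightarrow> (\<exists>x. x \<noteq> 0 \<and> absv x \<noteq> 1)"

definition complete_abs :: "('k::field \<Rightarrow> real) \<Rightarrow> bool" where
  "complete_abs absv \<longleftrightarrow>
     (\<forall>X::nat \<Rightarrow> 'k. (\<forall>e>0. \<exists>N. \<forall>m\<ge>N. \<forall>n\<ge>N. absv (X m - X n) < e) \<longrightarrow>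
        (\<exists>L. \<forall>e>0. \<exists>N. \<forall>n\<ge>N. absv (X n - L) < e))"

definition alg_closed :: "'k::field itself \<Rightarrow> bool" where
  "alg_closed _ \<longleftrightarrow> (\<forall>p::'k poly. degree p \<ge> 1 \<longrightarrow> (\<exists>x. poly p x = 0))"

definition nonarch_field :: "('k::field_char_0 \<Rightarrow> real) \<Rightarrow> bool" where
  "nonarch_field absv \<longleftrightarrow> nonarch_abs absv \<and> nontrivial_abs absv \<and>
     complete_abs absv \<and> alg_closed TYPE('k)"

definition berkA1 :: "('k::field_char_0 \<Rightarrow> real) \<Rightarrow> ('k poly \<Rightarrow> real) set" where
  "berkA1 absv = {\<phi>. (\<forall>p. \<phi> p \<ge> 0) \<and>
      (\<forall>p q. \<phi> (p * q) = \<phi> p * \<phi> q) \<and>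
      (\<forall>p q. \<phi> (p + q) \<le> \<phi> p + \<phi> q) \<and>
      (\<forall>c. \<phi> [:c:] = absv c)}"

definition classical_pt :: "('k::field_char_0 \<Rightarrow> real) \<Rightarrow> 'k \<Rightarrow> ('k poly \<Rightarrow> real)" where
  "classical_pt absv a = (\<lambda>p. absv (poly p a))"

definition berkH1 :: "('k::field_char_0 \<Rightarrow> real) \<Rightarrow> ('k poly \<Rightarrow> real) set" where
  "berkH1 absv = berkA1 absv - range (classical_pt absv)"

definition berk_top :: "('k::field_char_0 \<Rightarrow> real) \<Rightarrow> ('k poly \<Rightarrow> real) topology" where
  "berk_top absv = subtopology
     (topology_generated_by {{\<phi>. \<phi> p \<in> U} | p U. open (U::real set)}) (berkA1 absv)"

definition fiter :: "'k::field_char_0 poly \<Rightarrow> nat \<Rightarrow> 'k poly" where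
  "fiter f n = ((\<lambda>g. pcompose f g) ^^ n) [:0, 1:]"

definition push :: "'k::field_char_0 poly \<Rightarrow> ('k poly \<Rightarrow> real) \<Rightarrow> ('k poly \<Rightarrow> real)" where
  "push g \<phi> = (\<lambda>p. \<phi> (pcompose p g))"

text \<open>Filled Julia set and Julia set; f^n(\<xi>) \<rightarrow> \<infinity> in P^1 iff \<xi>(f^n) \<rightarrow> \<infinity>.\<close>
definition filled_julia :: "('k::field_char_0 \<Rightarrow> real) \<Rightarrow> 'k poly \<Rightarrow> ('k poly \<Rightarrow> real) set" where
  "filled_julia absv f = {\<phi> \<in> berkA1 absv.
      \<not> filterlim (\<lambda>n. push (fiter f n) \<phi> [:0, 1:]) at_top sequentially}"

definition julia :: "('k::field_char_0 \<Rightarrow> real) \<Rightarrow> 'k poly \<Rightarrow> ('k poly \<Rightarrow> real) set" where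
  "julia absv f = (berk_top absv) frontier_of (filled_julia absv f)"

definition disk_deg :: "('k::field_char_0 \<Rightarrow> real) \<Rightarrow> 'k poly \<Rightarrow> 'k \<Rightarrow> real \<Rightarrow> nat" where
  "disk_deg absv g a t =
     (\<Sum>b\<in>{b. poly g b = poly g a \<and> absv (b - a) \<le> t}. order b (g - [:poly g a:]))"

text \<open>Local degree of g at a point \<xi> of H^1: the least degree of g on a closed
  disk whose Berkovich disk contains \<xi> (this equals the usual local degree:
  e.g. the degree of the reduction at type II points).\<close>
definition loc_deg :: "('k::field_char_0 \<Rightarrow> real) \<Rightarrow> 'k poly \<Rightarrow> ('k poly \<Rightarrow> real) \<Rightarrow> nat" where
  "loc_deg absv g \<xi> = Inf {disk_deg absv g a t | a t. t > 0 \<and> \<xi> [:- a, 1:] \<le> t}"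

definition eventually_periodic :: "'k::field_char_0 poly \<Rightarrow> ('k poly \<Rightarrow> real) \<Rightarrow> bool" where
  "eventually_periodic f \<xi> \<longleftrightarrow>
     (\<exists>n m. m > 0 \<and> push (fiter f (n + m)) \<xi> = push (fiter f n) \<xi>)"

definition wandering :: "('k::field_char_0 \<Rightarrow> real) \<Rightarrow> 'k poly \<Rightarrow> ('k poly \<Rightarrow> real) \<Rightarrow> bool" where
  "wandering absv f \<xi> \<longleftrightarrow> \<xi> \<in> julia absv f \<inter> berkH1 absv \<and> \<not> eventually_periodic f \<xi>"

definition period :: "'k::field_char_0 poly \<Rightarrow> ('k poly \<Rightarrow> real) \<Rightarrow> nat" where
  "period f \<xi> = (LEAST m. m > 0 \<and> push (fiter f m) \<xi> = \<xi>)"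

definition repelling_periodic ::
  "('k::field_char_0 \<Rightarrow> real) \<Rightarrow> 'k poly \<Rightarrow> ('k poly \<Rightarrow> real) \<Rightarrow> bool" where
  "repelling_periodic absv f \<xi> \<longleftrightarrow> \<xi> \<in> berkH1 absv \<and>
     (\<exists>m>0. push (fiter f m) \<xi> = \<xi>) \<and> loc_deg absv (fiter f (period f \<xi>)) \<xi> > 1"

end

theory Submission
  imports Defs
begin


lemma na_props:
  assumes "nonarch_abs absv"
  shows "\<And>x. absv x \<ge> 0" "\<And>x y. absv (x*y) = absv x * absv y"
    "\<And>x y. absv (x+y) \<le> max (absv x) (absv y)" "\<And>x. absv x = 0 \<longleftrightarrow> x = 0"
  using assms unfolding nonarch_abs_def by auto

lemma na_one: assumes "nonarch_abs absv" shows "absv 1 = 1"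
proof -
  have "absv 1 = absv 1 * absv 1" using na_props(2)[OF assms, of 1 1] by simp
  moreover have "absv 1 \<noteq> 0" using na_props(4)[OF assms] by simp
  ultimately show ?thesis by (metis mult_cancel_right1)
qed

lemma na_minus1: assumes "nonarch_abs absv" shows "absv (-1) = 1"
proof -
  have "absv (-1) * absv (-1) = 1" using na_props(2)[OF assms, of "-1" "-1"] na_one[OF assms] by simp
  moreover have "absv (-1) \<ge> 0" using na_props(1)[OF assms] by simp
  moreover have "(absv (-1) - 1) * (absv (-1) + 1) = absv (-1) * absv (-1) - 1" by algebra
  ultimately have "(absv (-1) - 1) * (absv (-1) + 1) = 0" by simp
  moreover have "absv (-1) + 1 \<noteq> 0" using \<open>absv (-1) \<ge> 0\<close> by simp
  ultimately show ?thesis by simp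
qed

lemma na_uminus: assumes "nonarch_abs absv" shows "absv (-x) = absv x"
  using na_props(2)[OF assms, of "-1" x] na_minus1[OF assms] by simp

lemma na_commute: assumes "nonarch_abs absv" shows "absv (x - y) = absv (y - x)"
  using na_uminus[OF assms, of "x-y"] by simp

lemma na_diff: assumes "nonarch_abs absv" shows "absv (x - y) \<le> max (absv x) (absv y)"
  using na_props(3)[OF assms, of x "-y"] na_uminus[OF assms, of y] by simp

lemma na_of_nat: assumes "nonarch_abs absv" shows "absv (of_nat n) \<le> 1"
proof (induction n)
  case 0 then show ?case using na_props(4)[OF assms, of 0] by simp
next
  case (Suc n)
  have "absv (of_nat (Suc n)) \<le> max (absv (of_nat n)) (absv 1)"
    using na_props(3)[OF assms, of "of_nat n" 1] by (simp add: add.commute)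
  then show ?case using Suc na_one[OF assms] by simp
qed

context fixes absv :: "'k::field_char_0 \<Rightarrow> real" and \<phi> :: "'k poly \<Rightarrow> real"
  assumes na: "nonarch_abs absv" and ph: "\<phi> \<in> berkA1 absv"
begin

lemma ph_nonneg: "\<phi> p \<ge> 0" using ph unfolding berkA1_def by auto
lemma ph_mult: "\<phi> (p*q) = \<phi> p * \<phi> q" using ph unfolding berkA1_def by auto
lemma ph_add: "\<phi> (p+q) \<le> \<phi> p + \<phi> q" using ph unfolding berkA1_def by auto
lemma ph_const: "\<phi> [:c:] = absv c" using ph unfolding berkA1_def by auto
lemma ph_one: "\<phi> 1 = 1" using ph_const[of 1] na_one[OF na] by (simp add: one_pCons)
lemma ph_zero: "\<phi> 0 = 0" using ph_const[of 0] na_props(4)[OF na] by simp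
lemma ph_uminus: "\<phi> (-p) = \<phi> p"
proof -
  have "-p = [:-1:] * p" by simp
  then show ?thesis using ph_mult[of "[:-1:]" p] ph_const[of "-1"] na_minus1[OF na] by simp
qed
lemma ph_smult: "\<phi> (smult c p) = absv c * \<phi> p"
proof -
  have "\<phi> (smult c p) = \<phi> ([:c:] * p)" by simp
  also have "\<dots> = \<phi> [:c:] * \<phi> p" by (rule ph_mult)
  finally show ?thesis by (simp add: ph_const)
qed
lemma ph_power: "\<phi> (p^n) = \<phi> p ^ n"
  by (induction n) (simp_all add: ph_one ph_mult)
lemma ph_sum: "finite A \<Longrightarrow> \<phi> (sum f A) \<le> (\<Sum>x\<in>A. \<phi> (f x))"
proof (induction A rule: finite_induct)
  case empty then show ?case by (simp add: ph_zero)
next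
  case (insert x F) then show ?case using ph_add[of "f x" "sum f F"] by simp
qed

lemma ph_ultra: "\<phi> (p+q) \<le> max (\<phi> p) (\<phi> q)"
proof (rule ccontr)
  define M where "M = max (\<phi> p) (\<phi> q)"
  assume "\<not> ?thesis"
  then have gt: "\<phi> (p+q) > M" unfolding M_def by (simp add: not_le del: max_less_iff_conj)
  have M0: "M \<ge> 0" unfolding M_def using ph_nonneg by (simp add: le_max_iff_disj)
  have bound: "\<phi> (p+q) ^ n \<le> real (n+1) * M ^ n" for n
  proof -
    have "\<phi> (p+q) ^ n = \<phi> ((p+q)^n)" by (simp add: ph_power)
    also have "(p+q)^n = (\<Sum>k\<le>n. of_nat (n choose k) * p^k * q^(n-k))" by (rule binomial_ring)
    also have "\<phi> \<dots> \<le> (\<Sum>k\<le>n. \<phi> (of_nat (n choose k) * p^k * q^(n-k)))" by (rule ph_sum) simp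
    also have "\<dots> \<le> (\<Sum>k\<le>n. M ^ n)"
    proof (rule sum_mono)
      fix k assume k: "k \<in> {..n}"
      have "\<phi> (of_nat (n choose k) * p^k * q^(n-k)) = absv (of_nat (n choose k)) * \<phi> p ^ k * \<phi> q ^ (n-k)"
        by (simp add: ph_mult ph_power of_nat_poly ph_smult)
      also have "\<dots> \<le> 1 * M ^ k * M ^ (n-k)"
        apply (intro mult_mono power_mono)
        using na_of_nat[OF na] ph_nonneg M0 by (auto simp: M_def intro: zero_le_power)
      also have "\<dots> = M ^ n" using k by (simp add: power_add[symmetric])
      finally show "\<phi> (of_nat (n choose k) * p^k * q^(n-k)) \<le> M ^ n" .
    qed
    also have "\<dots> = real (n+1) * M ^ n" by simp
    finally show ?thesis .
  qed
  show False
  proof (cases "M = 0")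
    case True
    then have "\<phi> p = 0" "\<phi> q = 0" using ph_nonneg[of p] ph_nonneg[of q] unfolding M_def by (auto simp: max_def split: if_splits)
    then show False using ph_add[of p q] gt True by simp
  next
    case False
    then have Mp: "M > 0" using M0 by simp
    define r where "r = \<phi> (p+q) / M"
    have r1: "r > 1" using gt Mp unfolding r_def by simp
    have rb: "r ^ n \<le> real (n+1)" for n
      using bound[of n] Mp unfolding r_def by (simp add: power_divide divide_le_eq)
    obtain n :: nat where n: "real n > 3 / (r-1)^2 + 1" using reals_Archimedean2 by blast
    have "3 / (r-1)^2 \<ge> 0" using r1 by simp
    then have np: "real n \<ge> 1" using n by linarith
    have bern: "r ^ n \<ge> 1 + real n * (r - 1)"
      using Bernoulli_inequality[of "r-1" n] r1 by simp
    have "r ^ (2*n) = (r^n)^2" by (metis power_mult mult.commute)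
    also have "\<dots> \<ge> (real n * (r-1))^2" using bern r1 np
      by (intro power_mono) auto
    finally have A: "r^(2*n) \<ge> (real n)^2 * (r-1)^2" by (simp add: power_mult_distrib)
    have "(real n - 1) * (r-1)^2 > 3" using n r1
      by (simp add: field_simps)
    then have "real n * ((real n - 1) * (r-1)^2) > real n * 3"
      using np by (intro mult_strict_left_mono) auto
    moreover have "real n * ((real n - 1) * (r-1)^2) = (real n)^2 * (r-1)^2 - real n * (r-1)^2"
      by (simp add: power2_eq_square algebra_simps)
    moreover have "real n * (r-1)^2 \<ge> 0" using np by simp
    ultimately have "(real n)^2 * (r-1)^2 > 3 * real n" by linarith
    then have "r^(2*n) > real (2*n+1)" using A np by simp
    then show False using rb[of "2*n"] by simp
  qed
qed

lemma ph_ultra_diff: "\<phi> (p-q) \<le> max (\<phi> p) (\<phi> q)"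
  using ph_ultra[of p "-q"] ph_uminus[of q] by simp

lemma ph_strict: "\<phi> p < \<phi> q \<Longrightarrow> \<phi> (p+q) = \<phi> q"
proof -
  assume a: "\<phi> p < \<phi> q"
  have "\<phi> q \<le> max (\<phi> (p+q)) (\<phi> (-p))" using ph_ultra[of "p+q" "-p"] by simp
  then have "\<phi> q \<le> \<phi> (p+q)" using a ph_uminus[of p] by (auto simp: max_def split: if_splits)
  moreover have "\<phi> (p+q) \<le> \<phi> q" using ph_ultra[of p q] a by simp
  ultimately show ?thesis by simp
qed

lemma ph_strict_diff: "\<phi> p < \<phi> q \<Longrightarrow> \<phi> (q - p) = \<phi> q"
  using ph_strict[of "-p" q] ph_uminus[of p] by (simp add: add.commute)

end



lemma berkA1_I: "\<lbrakk>\<And>p. \<phi> p \<ge> 0; \<And>p q. \<phi> (p*q) = \<phi> p * \<phi> q; \<And>p q. \<phi> (p+q) \<le> \<phi> p + \<phi> q;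
   \<And>c. \<phi> [:c:] = absv c\<rbrakk> \<Longrightarrow> \<phi> \<in> berkA1 absv"
  unfolding berkA1_def by auto

lemma push_berkA1: "\<phi> \<in> berkA1 absv \<Longrightarrow> push g \<phi> \<in> berkA1 absv"
  unfolding berkA1_def push_def by (auto simp: pcompose_mult pcompose_add)

lemma push_push: "push g (push h \<phi>) = push (pcompose g h) \<phi>"
  unfolding push_def by (simp add: pcompose_assoc)

lemma fiter_0: "fiter f 0 = [:0,1:]" unfolding fiter_def by simp
lemma fiter_Suc: "fiter f (Suc n) = pcompose f (fiter f n)" unfolding fiter_def by simp

lemma pcompose_X: "pcompose [:0,1:] g = (g::'k::field_char_0 poly)"
  by (simp add: pcompose_pCons)

lemma pcompose_X_right: "pcompose p [:0,1:] = (p::'k::field_char_0 poly)"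
  by (induction p) (simp_all add: pcompose_pCons)

lemma fiter_add: "fiter f (n+m) = pcompose (fiter f n) (fiter f m)"
proof (induction n)
  case 0 then show ?case by (simp add: fiter_0 pcompose_X)
next
  case (Suc n) then show ?case by (simp add: fiter_Suc pcompose_assoc)
qed

lemma push_fiter_add: "push (fiter f (n+m)) \<phi> = push (fiter f m) (push (fiter f n) \<phi>)"
  by (simp add: push_push fiter_add[symmetric] add.commute)

lemma degree_fiter: "degree (fiter f n) = degree f ^ n"
  by (induction n) (simp_all add: fiter_0 fiter_Suc degree_pcompose)

lemma pcompose_lin: "pcompose [:-a,1:] g = g - [:a::'k::field_char_0:]"
  by (simp add: pcompose_pCons)

lemma push_apply: "push g \<phi> p = \<phi> (pcompose p g)" unfolding push_def by simp

lemma classical_in: "nonarch_abs absv \<Longrightarrow> classical_pt absv a \<in> berkA1 absv"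
  unfolding classical_pt_def using na_props[of absv]
  by (intro berkA1_I) (auto intro: order.trans[OF _ max.boundedI] simp: poly_mult le_max_iff_disj,
      smt (verit) max.cobounded1 max.cobounded2 na_props(1))

lemma lin_diff: "[:-a,1:] - [:-b,1:] = [:b - a::'k::field_char_0:]" by simp

context fixes absv :: "'k::field_char_0 \<Rightarrow> real" and \<phi> :: "'k poly \<Rightarrow> real"
  assumes na: "nonarch_abs absv" and ph: "\<phi> \<in> berkA1 absv"
begin

lemma zero_classical:
  assumes z: "\<phi> [:-b,1:] = 0" shows "\<phi> = classical_pt absv b"
proof
  fix p
  obtain q where q: "p - [:poly p b:] = [:-b,1:] * q"
    using poly_eq_0_iff_dvd[of "p - [:poly p b:]" b] by (auto elim: dvdE)
  have z2: "\<phi> ([:-b,1:] * q) = 0" by (simp only: ph_mult[OF na ph] z mult_zero_left)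
  have "p = [:poly p b:] + [:-b,1:] * q" using q by (simp add: algebra_simps)
  then have "\<phi> p \<le> max (absv (poly p b)) 0"
    using ph_ultra[OF na ph, of "[:poly p b:]" "[:-b,1:] * q"] z2 ph_const[OF na ph] by simp
  moreover have "absv (poly p b) \<le> max (\<phi> p) 0"
  proof -
    have "absv (poly p b) = \<phi> [:poly p b:]" by (rule ph_const[OF na ph, symmetric])
    also have "[:poly p b:] = p - [:-b,1:] * q" by (simp only: q[symmetric]) simp
    also have "\<phi> (p - [:-b,1:] * q) \<le> max (\<phi> p) (\<phi> ([:-b,1:] * q))" by (rule ph_ultra_diff[OF na ph])
    finally show ?thesis by (simp only: z2)
  qed
  ultimately show "\<phi> p = classical_pt absv b p"
    unfolding classical_pt_def using ph_nonneg[OF na ph, of p] na_props(1)[OF na, of "poly p b"] by (auto simp: max_def split: if_splits)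
qed

lemma zero_root:
  assumes ac: "alg_closed TYPE('k)" shows "p \<noteq> 0 \<Longrightarrow> \<phi> p = 0 \<Longrightarrow> \<exists>b. \<phi> [:-b,1:] = 0"
proof (induction "degree p" arbitrary: p)
  case 0
  then obtain c where "p = [:c:]" "c \<noteq> 0" by (metis degree_eq_zeroE pCons_0_0)
  then show ?case using 0 ph_const[OF na ph] na_props(4)[OF na] by simp
next
  case (Suc n)
  then obtain b where b: "poly p b = 0" using ac unfolding alg_closed_def by (metis le_add1 plus_1_eq_Suc)
  then have "[:-b,1:] dvd p" using poly_eq_0_iff_dvd by blast
  then obtain q where q: "p = [:-b,1:] * q" by (rule dvdE)
  show ?case
  proof (cases "\<phi> [:-b,1:] = 0")
    case True then show ?thesis by blast
  next
    case False
    then have "\<phi> q = 0" using Suc.prems ph_mult[OF na ph, of "[:-b,1:]" q] q by simp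
    moreover have "q \<noteq> 0" using Suc.prems q by auto
    moreover have "degree q = n"
    proof -
      have "degree p = degree [:-b,1:] + degree q" unfolding q
        using \<open>q \<noteq> 0\<close> by (intro degree_mult_eq) auto
      then show ?thesis using Suc.hyps(2) by simp
    qed
    ultimately show ?thesis using Suc.hyps(1) by blast
  qed
qed

lemma small_classical:
  assumes comp: "complete_abs absv" and sm: "\<forall>e>0. \<exists>b. \<phi> [:-b,1:] < e"
  shows "\<phi> \<in> range (classical_pt absv)"
proof -
  have "\<forall>n::nat. \<exists>b. \<phi> [:-b,1:] < 1 / (real n + 1)" using sm by simp
  then obtain b where b: "\<And>n. \<phi> [:-b n,1:] < 1 / (real n + 1)" by metis
  have ab: "absv (b m - b n) \<le> max (\<phi> [:-b n,1:]) (\<phi> [:-b m,1:])" for m n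
    using ph_ultra_diff[OF na ph, of "[:-b n,1:]" "[:-b m,1:]"] ph_const[OF na ph] by simp
  have "\<forall>e>0. \<exists>N. \<forall>m\<ge>N. \<forall>n\<ge>N. absv (b m - b n) < e"
  proof (intro allI impI)
    fix e :: real assume e: "e > 0"
    obtain N :: nat where N: "1 / (real N + 1) < e"
      using e by (metis reals_Archimedean2 less_trans inverse_eq_divide real_arch_inverse
          of_nat_Suc add.commute nat_approx_posE)
    have "absv (b m - b n) < e" if "m \<ge> N" "n \<ge> N" for m n
    proof -
      have "1 / (real n + 1) \<le> 1 / (real N + 1)" "1 / (real m + 1) \<le> 1 / (real N + 1)"
        using that by (auto simp: divide_simps)
      then have "max (\<phi> [:-b n,1:]) (\<phi> [:-b m,1:]) < e" using b[of m] b[of n] N by simp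
      then show ?thesis using ab[of m n] by linarith
    qed
    then show "\<exists>N. \<forall>m\<ge>N. \<forall>n\<ge>N. absv (b m - b n) < e" by blast
  qed
  then obtain L where L: "\<forall>e>0. \<exists>N. \<forall>n\<ge>N. absv (b n - L) < e"
    using comp unfolding complete_abs_def by blast
  have "\<phi> [:-L,1:] < e" if e: "e > 0" for e
  proof -
    obtain N where N: "\<forall>n\<ge>N. absv (b n - L) < e" using L e by blast
    obtain M :: nat where M: "1 / (real M + 1) < e"
      using e by (metis reals_Archimedean2 less_trans inverse_eq_divide real_arch_inverse
          of_nat_Suc add.commute nat_approx_posE)
    define n where "n = max N M"
    have "1 / (real n + 1) \<le> 1 / (real M + 1)" unfolding n_def by (auto simp: divide_simps)
    then have h1: "\<phi> [:-b n,1:] < e" using b[of n] M by simp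
    have h2: "absv (b n - L) < e" using N n_def by simp
    have "\<phi> [:-L,1:] \<le> max (\<phi> [:-b n,1:]) (absv (b n - L))"
      using ph_ultra[OF na ph, of "[:-b n,1:]" "[:b n - L:]"] ph_const[OF na ph] by simp
    then show ?thesis using h1 h2 by simp
  qed
  then have "\<phi> [:-L,1:] = 0" using ph_nonneg[OF na ph, of "[:-L,1:]"]
    by (metis less_eq_real_def not_less)
  then show ?thesis using zero_classical by blast
qed

end

lemma push_H1:
  assumes na: "nonarch_abs absv" and ac: "alg_closed TYPE('k::field_char_0)"
    and xi: "\<xi> \<in> berkH1 absv" and dg: "degree (g::'k poly) \<ge> 1"
  shows "push g \<xi> \<in> berkH1 absv"
proof -
  have xiA: "\<xi> \<in> berkA1 absv" using xi unfolding berkH1_def by auto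
  have "push g \<xi> \<notin> range (classical_pt absv)"
  proof
    assume "push g \<xi> \<in> range (classical_pt absv)"
    then obtain c where c: "push g \<xi> = classical_pt absv c" by auto
    have "\<xi> (g - [:c:]) = push g \<xi> [:-c,1:]" by (simp add: push_apply pcompose_lin)
    also have "\<dots> = 0" using c na_props(4)[OF na] by (simp add: classical_pt_def)
    finally have z: "\<xi> (g - [:c:]) = 0" .
    have "g - [:c:] \<noteq> 0" using dg by (metis degree_pCons_0 diff_eq_eq add_0 le_zero_eq not_one_le_zero)
    then obtain b where "\<xi> [:-b,1:] = 0" using zero_root[OF na xiA ac] z by blast
    then have "\<xi> = classical_pt absv b" using zero_classical[OF na xiA] by blast
    then show False using xi unfolding berkH1_def by auto
  qed
  then show ?thesis using push_berkA1[OF xiA] unfolding berkH1_def by auto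
qed




lemma lin_split: "[:-s,1:] = [:-a,1:] + [:a - s::'k::field_char_0:]" by simp

lemma far_const:
  fixes absv :: "'k::field_char_0 \<Rightarrow> real"
  assumes na: "nonarch_abs absv" and ac: "alg_closed TYPE('k)" and ph: "\<phi> \<in> berkA1 absv"
    and lt: "\<phi> [:-a,1:] < R"
  shows "p \<noteq> 0 \<Longrightarrow> (\<forall>s. poly p s = 0 \<longrightarrow> absv (s - a) \<ge> R) \<Longrightarrow> \<phi> p = absv (poly p a)"
proof (induction "degree p" arbitrary: p)
  case 0
  then obtain c where "p = [:c:]" by (metis degree_eq_zeroE)
  then show ?case using ph_const[OF na ph] by simp
next
  case (Suc n)
  then obtain s where s: "poly p s = 0" using ac unfolding alg_closed_def by (metis le_add1 plus_1_eq_Suc)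
  then have "[:-s,1:] dvd p" using poly_eq_0_iff_dvd by blast
  then obtain q where q: "p = [:-s,1:] * q" by (rule dvdE)
  have qnz: "q \<noteq> 0" using Suc.prems q by auto
  have dq: "degree q = n"
  proof -
    have "degree p = degree [:-s,1:] + degree q" unfolding q
      using qnz by (intro degree_mult_eq) auto
    then show ?thesis using Suc.hyps(2) by simp
  qed
  have qroots: "\<forall>t. poly q t = 0 \<longrightarrow> absv (t - a) \<ge> R"
    using Suc.prems(2) q by auto
  have IH: "\<phi> q = absv (poly q a)" using Suc.hyps(1)[OF dq[symmetric] qnz qroots] .
  have sR: "absv (s - a) \<ge> R" using Suc.prems(2) s by auto
  have "\<phi> [:-s,1:] = \<phi> ([:-a,1:] + [:a - s:])" by (simp only: lin_split[of s a])
  also have "\<dots> = \<phi> [:a - s:]"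
    using lt sR ph_const[OF na ph, of "a-s"] na_commute[OF na, of a s] by (intro ph_strict[OF na ph]) simp
  also have "\<dots> = absv (a - s)" by (rule ph_const[OF na ph])
  finally have l: "\<phi> [:-s,1:] = absv (a - s)" .
  have "\<phi> p = \<phi> [:-s,1:] * \<phi> q" unfolding q by (rule ph_mult[OF na ph])
  also have "\<dots> = absv (a - s) * absv (poly q a)" using l IH by simp
  also have "\<dots> = absv ((a - s) * poly q a)" using na_props(2)[OF na] by simp
  also have "(a - s) * poly q a = poly p a" unfolding q by (simp add: algebra_simps)
  finally show ?case .
qed

lemma far_diff:
  fixes absv :: "'k::field_char_0 \<Rightarrow> real"
  assumes na: "nonarch_abs absv" and ac: "alg_closed TYPE('k)" and ph: "\<phi> \<in> berkA1 absv"
    and lt: "\<phi> [:-a,1:] < R" and bR: "absv (b - a) < R"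
  shows "p \<noteq> 0 \<Longrightarrow> (\<forall>s. poly p s = 0 \<longrightarrow> absv (s - a) \<ge> R) \<Longrightarrow>
     \<phi> (p - [:poly p b:]) \<le> absv (poly p b) * \<phi> [:-b,1:] / R"
proof (induction "degree p" arbitrary: p)
  case 0
  have R0: "R > 0" using lt ph_nonneg[OF na ph, of "[:-a,1:]"] by simp
  from 0 obtain c where "p = [:c:]" by (metis degree_eq_zeroE)
  then show ?case using ph_zero[OF na ph] R0 ph_nonneg[OF na ph] na_props(1)[OF na] by simp
next
  case (Suc n)
  have R0: "R > 0" using lt ph_nonneg[OF na ph, of "[:-a,1:]"] by simp
  obtain s where s: "poly p s = 0" using Suc ac unfolding alg_closed_def by (metis le_add1 plus_1_eq_Suc)
  then have "[:-s,1:] dvd p" using poly_eq_0_iff_dvd by blast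
  then obtain q where q: "p = [:-s,1:] * q" by (rule dvdE)
  have qnz: "q \<noteq> 0" using Suc.prems q by auto
  have dq: "degree q = n"
  proof -
    have "degree p = degree [:-s,1:] + degree q" unfolding q
      using qnz by (intro degree_mult_eq) auto
    then show ?thesis using Suc.hyps(2) by simp
  qed
  have qroots: "\<forall>t. poly q t = 0 \<longrightarrow> absv (t - a) \<ge> R"
    using Suc.prems(2) q by auto
  have IH: "\<phi> (q - [:poly q b:]) \<le> absv (poly q b) * \<phi> [:-b,1:] / R"
    using Suc.hyps(1)[OF dq[symmetric] qnz qroots] .
  have sR: "absv (s - a) \<ge> R" using Suc.prems(2) s by auto
  have "absv (s - a) \<le> max (absv (s - b)) (absv (b - a))"
    using na_props(3)[OF na, of "s - b" "b - a"] by simp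
  then have bs: "absv (b - s) \<ge> R" using sR bR na_commute[OF na, of s b] by (auto simp: max_def split: if_splits)
  have phq: "\<phi> q = absv (poly q b)"
  proof -
    have "\<phi> q = absv (poly q a)" using far_const[OF na ac ph lt qnz qroots] .
    moreover have "classical_pt absv b q = absv (poly q a)"
      using far_const[OF na ac classical_in[OF na, of b] _ qnz qroots] bR
      by (simp add: classical_pt_def)
    ultimately show ?thesis by (simp add: classical_pt_def)
  qed
  have "poly p b = (b - s) * poly q b" unfolding q by (simp add: algebra_simps)
  then have pb: "absv (poly p b) = absv (b - s) * absv (poly q b)" using na_props(2)[OF na] by simp
  have eq: "p - [:poly p b:] = [:-b,1:] * q + [:b - s:] * (q - [:poly q b:])"
    unfolding q by (simp add: algebra_simps) (simp add: smult_add_left[symmetric])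
  have t1: "\<phi> ([:-b,1:] * q) \<le> absv (poly p b) * \<phi> [:-b,1:] / R"
  proof -
    have "\<phi> ([:-b,1:] * q) = \<phi> [:-b,1:] * absv (poly q b)" by (simp only: ph_mult[OF na ph] phq)
    also have "\<dots> \<le> \<phi> [:-b,1:] * absv (poly q b) * (absv (b - s) / R)"
    proof -
      have h: "1 \<le> absv (b - s) / R" using bs R0 by simp
      have "\<phi> [:-b,1:] * absv (poly q b) * 1 \<le> \<phi> [:-b,1:] * absv (poly q b) * (absv (b - s) / R)"
        by (rule mult_left_mono[OF h]) (use ph_nonneg[OF na ph, of "[:-b,1:]"] na_props(1)[OF na, of "poly q b"] in simp)
      then show ?thesis by simp
    qed
    also have "\<dots> = absv (poly p b) * \<phi> [:-b,1:] / R"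
      using R0 by (simp add: pb field_simps)
    finally show ?thesis .
  qed
  have t2: "\<phi> ([:b - s:] * (q - [:poly q b:])) \<le> absv (poly p b) * \<phi> [:-b,1:] / R"
  proof -
    have "\<phi> ([:b - s:] * (q - [:poly q b:])) = absv (b - s) * \<phi> (q - [:poly q b:])"
      by (simp only: ph_mult[OF na ph] ph_const[OF na ph])
    also have "\<dots> \<le> absv (b - s) * (absv (poly q b) * \<phi> [:-b,1:] / R)"
      using IH na_props(1)[OF na] by (intro mult_left_mono) auto
    also have "\<dots> = absv (poly p b) * \<phi> [:-b,1:] / R"
      using R0 by (simp add: pb field_simps)
    finally show ?thesis .
  qed
  show ?case unfolding eq using ph_ultra[OF na ph, of "[:-b,1:] * q" "[:b - s:] * (q - [:poly q b:])"] t1 t2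
    by simp
qed




lemma scaling:
  fixes absv :: "'k::field_char_0 \<Rightarrow> real"
  assumes na: "nonarch_abs absv" and ac: "alg_closed TYPE('k)" and ph: "\<phi> \<in> berkA1 absv"
    and lt: "\<phi> [:-a,1:] < R" and bR: "absv (b - a) < R"
    and G: "g - [:poly g a:] = [:-a,1:] * h" and hnz: "h \<noteq> 0"
    and far: "\<forall>s. poly h s = 0 \<longrightarrow> absv (s - a) \<ge> R"
  shows "\<phi> (g - [:poly g b:]) = absv (poly h a) * \<phi> [:-b,1:]"
proof -
  define C where "C = absv (poly h a)"
  have R0: "R > 0" using lt ph_nonneg[OF na ph, of "[:-a,1:]"] by simp
  have ha: "poly h a \<noteq> 0" using far R0 na_props(4)[OF na, of 0] by force
  have C0: "C > 0" unfolding C_def using ha na_props(1,4)[OF na, of "poly h a"] by (simp add: less_le)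
  have phh: "\<phi> h = C" unfolding C_def by (rule far_const[OF na ac ph lt hnz far])
  have hb: "absv (poly h b) = C"
    using far_const[OF na ac classical_in[OF na, of b] _ hnz far] bR
    by (simp add: classical_pt_def C_def)
  have "poly (g - [:poly g a:]) b = (b - a) * poly h b" unfolding G by (simp add: algebra_simps)
  then have gb: "poly g b = poly g a + (b - a) * poly h b" by (simp add: algebra_simps)
  have eq: "g - [:poly g b:] = [:-b,1:] * h + [:b - a:] * (h - [:poly h b:])"
  proof -
    have "g - [:poly g b:] = (g - [:poly g a:]) - [:(b - a) * poly h b:]"
      using gb by simp
    also have "\<dots> = [:-a,1:] * h - [:(b - a) * poly h b:]" using G by simp
    also have "\<dots> = [:-b,1:] * h + [:b - a:] * (h - [:poly h b:])"
      by (simp add: algebra_simps) (simp add: smult_add_left[symmetric])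
    finally show ?thesis .
  qed
  have t1: "\<phi> ([:-b,1:] * h) = C * \<phi> [:-b,1:]" by (simp only: ph_mult[OF na ph] phh mult.commute)
  have t2: "\<phi> ([:b - a:] * (h - [:poly h b:])) \<le> absv (b - a) * (C * \<phi> [:-b,1:] / R)"
  proof -
    have "\<phi> ([:b - a:] * (h - [:poly h b:])) = absv (b - a) * \<phi> (h - [:poly h b:])"
      by (simp only: ph_mult[OF na ph] ph_const[OF na ph])
    also have "\<dots> \<le> absv (b - a) * (C * \<phi> [:-b,1:] / R)"
      using far_diff[OF na ac ph lt bR hnz far] hb na_props(1)[OF na, of "b-a"]
      by (intro mult_left_mono) auto
    finally show ?thesis .
  qed
  show ?thesis
  proof (cases "\<phi> [:-b,1:] = 0")
    case True
    then have "\<phi> (g - [:poly g b:]) \<le> 0"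
      unfolding eq using ph_ultra[OF na ph, of "[:-b,1:] * h" "[:b - a:] * (h - [:poly h b:])"] t1 t2
      by simp
    then show ?thesis using True ph_nonneg[OF na ph, of "g - [:poly g b:]"] by simp
  next
    case False
    then have pos: "\<phi> [:-b,1:] > 0" using ph_nonneg[OF na ph, of "[:-b,1:]"] by simp
    have "absv (b - a) * (C * \<phi> [:-b,1:] / R) < R * (C * \<phi> [:-b,1:] / R)"
      using bR pos C0 R0 by (intro mult_strict_right_mono) auto
    also have "\<dots> = C * \<phi> [:-b,1:]" using R0 by simp
    finally have "\<phi> ([:b - a:] * (h - [:poly h b:])) < \<phi> ([:-b,1:] * h)" using t1 t2 by simp
    then have "\<phi> ([:b - a:] * (h - [:poly h b:]) + [:-b,1:] * h) = \<phi> ([:-b,1:] * h)"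
      by (rule ph_strict[OF na ph])
    then show ?thesis unfolding eq C_def[symmetric] using t1 by (simp add: add.commute)
  qed
qed




lemma fix_lin: "push g \<eta> = \<eta> \<Longrightarrow> \<eta> [:-c,1:] = \<eta> (g - [:c::'k::field_char_0:])"
  by (metis push_apply pcompose_lin)

lemma local_inv:
  fixes absv :: "'k::field_char_0 \<Rightarrow> real"
  assumes na: "nonarch_abs absv" and ac: "alg_closed TYPE('k)" and comp: "complete_abs absv"
    and dg: "degree g \<ge> 1" and eH: "\<eta> \<in> berkH1 absv" and fx: "push g \<eta> = \<eta>"
    and t0: "t > 0" and et: "\<eta> [:-a,1:] \<le> t" and dd: "disk_deg absv g a t \<le> 1"
  shows "\<exists>R. \<eta> [:-a,1:] < R \<and> (\<forall>\<phi>\<in>berkA1 absv. \<phi> [:-a,1:] < R \<longrightarrow> push g \<phi> [:-a,1:] < R)"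
proof -
  have eA: "\<eta> \<in> berkA1 absv" using eH unfolding berkH1_def by auto
  define G0 where "G0 = g - [:poly g a:]"
  have G0nz: "G0 \<noteq> 0" unfolding G0_def using dg
    by (metis degree_pCons_0 diff_eq_eq add_0 le_zero_eq not_one_le_zero)
  have "poly G0 a = 0" unfolding G0_def by simp
  then have "[:-a,1:] dvd G0" using poly_eq_0_iff_dvd by blast
  then obtain h where G: "G0 = [:-a,1:] * h" by (rule dvdE)
  have hnz: "h \<noteq> 0" using G G0nz by auto
  define S where "S = {b. poly g b = poly g a \<and> absv (b - a) \<le> t}"
  have dd': "(\<Sum>b\<in>S. order b G0) \<le> 1" using dd unfolding disk_deg_def S_def G0_def .
  have finS: "finite S"
  proof (rule finite_subset[OF _ poly_roots_finite[OF G0nz]])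
    show "S \<subseteq> {x. poly G0 x = 0}" unfolding S_def G0_def by auto
  qed
  have aS: "a \<in> S" unfolding S_def using na_props(4)[OF na, of 0] t0 by simp
  have ordpos: "b \<in> S \<Longrightarrow> order b G0 \<ge> 1" for b
    using order_gt_0_iff[OF G0nz, of b] unfolding S_def G0_def by auto
  have ha: "poly h a \<noteq> 0"
  proof
    assume "poly h a = 0"
    then have "order a h \<ge> 1" using order_gt_0_iff[OF hnz, of a] by simp
    moreover have "order a G0 = order a [:-a,1:] + order a h" unfolding G
      using G G0nz by (intro order_mult) metis
    moreover have "order a [:-a,1:] = 1" using order_power_n_n[of a 1] by simp
    ultimately have "order a G0 \<ge> 2" by simp
    moreover have "order a G0 \<le> (\<Sum>b\<in>S. order b G0)" using member_le_sum[OF aS _ finS, of "\<lambda>b. order b G0"] by simp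
    ultimately show False using dd' by simp
  qed
  have hroots: "poly h s = 0 \<Longrightarrow> absv (s - a) > t" for s
  proof (rule ccontr)
    assume hs: "poly h s = 0" and "\<not> absv (s - a) > t"
    then have st: "absv (s - a) \<le> t" by simp
    have sa: "s \<noteq> a" using hs ha by auto
    have "poly G0 s = 0" unfolding G using hs by simp
    then have sS: "s \<in> S" using st unfolding S_def G0_def by simp
    have "(\<Sum>b\<in>{a,s}. order b G0) \<le> (\<Sum>b\<in>S. order b G0)"
      using aS sS finS by (intro sum_mono2) auto
    moreover have "(\<Sum>b\<in>{a,s}. order b G0) \<ge> 2" using sa ordpos[OF aS] ordpos[OF sS] by simp
    ultimately show False using dd' by simp
  qed
  define F where "F = {s. poly h s = 0}"
  have finF: "finite F" unfolding F_def using poly_roots_finite[OF hnz] .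
  define R where "R = (if F = {} then t + 1 else Min ((\<lambda>s. absv (s - a)) ` F))"
  have Rt: "R > t" unfolding R_def using finF hroots F_def by (auto simp: Min_gr_iff)
  have far: "\<forall>s. poly h s = 0 \<longrightarrow> absv (s - a) \<ge> R"
    unfolding R_def F_def using finF[unfolded F_def] by (auto intro: Min_le)
  define C where "C = absv (poly h a)"
  have Gh: "g - [:poly g a:] = [:-a,1:] * h" using G unfolding G0_def .
  have etaR: "\<eta> [:-a,1:] < R" using et Rt by simp
  have R0: "R > 0" using t0 Rt by simp
  have sc: "\<And>\<phi> b. \<phi> \<in> berkA1 absv \<Longrightarrow> \<phi> [:-a,1:] < R \<Longrightarrow> absv (b - a) < R \<Longrightarrow>
      \<phi> (g - [:poly g b:]) = C * \<phi> [:-b,1:]"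
    unfolding C_def using scaling[OF na ac _ _ _ Gh hnz far] by blast
  have ega: "\<eta> [:-poly g a,1:] = C * \<eta> [:-a,1:]"
    using fix_lin[OF fx] sc[OF eA etaR, of a] R0 na_props(4)[OF na, of 0] by simp
  show ?thesis
  proof (cases "C \<le> 1")
    case True
    have Cx: "C * x \<le> x" if "x \<ge> 0" for x
      using mult_left_le_one_le[OF that _ True] na_props(1)[OF na] unfolding C_def by blast
    have "\<eta> [:-poly g a,1:] < R"
      using ega Cx[of "\<eta> [:-a,1:]"] etaR ph_nonneg[OF na eA, of "[:-a,1:]"] by linarith
    then have gaa: "absv (poly g a - a) < R"
      using ph_ultra_diff[OF na eA, of "[:-a,1:]" "[:-poly g a,1:]"] etaR ph_const[OF na eA]
      by (simp add: lin_diff)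
    have "push g \<phi> [:-a,1:] < R" if phA: "\<phi> \<in> berkA1 absv" and phR: "\<phi> [:-a,1:] < R" for \<phi>
    proof -
      have "push g \<phi> [:-a,1:] = \<phi> ((g - [:poly g a:]) + [:poly g a - a:])"
      proof -
        have "g - [:a:] = (g - [:poly g a:]) + [:poly g a - a:]" by (simp add: algebra_simps)
        then show ?thesis by (metis push_apply pcompose_lin)
      qed
      also have "\<dots> \<le> max (\<phi> (g - [:poly g a:])) (\<phi> [:poly g a - a:])" by (rule ph_ultra[OF na phA])
      also have "\<phi> (g - [:poly g a:]) = C * \<phi> [:-a,1:]"
        using sc[OF phA phR, of a] R0 na_props(4)[OF na, of 0] by simp
      also have "\<phi> [:poly g a - a:] = absv (poly g a - a)" by (rule ph_const[OF na phA])
      finally show ?thesis using gaa Cx[of "\<phi> [:-a,1:]"] phR ph_nonneg[OF na phA, of "[:-a,1:]"]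
        by simp
    qed
    then show ?thesis using etaR by blast
  next
    case False
    then have C1: "C > 1" by simp
    define \<delta> where "\<delta> = Inf (range (\<lambda>b. \<eta> [:-b,1:]))"
    have bdd: "bdd_below (range (\<lambda>b. \<eta> [:-b,1:]))"
      using ph_nonneg[OF na eA] by (intro bdd_belowI[of _ 0]) auto
    have low: "\<delta> \<le> \<eta> [:-b,1:]" for b unfolding \<delta>_def by (rule cInf_lower[OF _ bdd]) auto
    have lessI: "\<delta> < x \<Longrightarrow> \<exists>b. \<eta> [:-b,1:] < x" for x
      unfolding \<delta>_def using cInf_less_iff[OF _ bdd] by auto
    have d0: "\<delta> > 0"
    proof (rule ccontr)
      assume "\<not> \<delta> > 0"
      then have "\<forall>e>0. \<exists>b. \<eta> [:-b,1:] < e" using lessI by force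
      then have "\<eta> \<in> range (classical_pt absv)" by (rule small_classical[OF na eA comp])
      then show False using eH unfolding berkH1_def by auto
    qed
    have "\<delta> < C * \<delta>" using C1 d0 by simp
    then obtain c where c: "\<eta> [:-c,1:] < C * \<delta>" using lessI by blast
    have ec: "\<eta> (g - [:c:]) = \<eta> [:-c,1:]" using fix_lin[OF fx] by simp
    have "C * \<delta> \<le> C * \<eta> [:-a,1:]" using low[of a] C1 by simp
    then have cl: "\<eta> [:-c,1:] < \<eta> [:-poly g a,1:]" using c ega by simp
    have "\<eta> ([:-poly g a,1:] - [:-c,1:]) = \<eta> [:-poly g a,1:]" by (rule ph_strict_diff[OF na eA cl])
    then have gac: "absv (c - poly g a) = \<eta> [:-poly g a,1:]" using ph_const[OF na eA] by (simp add: lin_diff)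
    have gcnz: "g - [:c:] \<noteq> 0" using dg
      by (metis degree_pCons_0 diff_eq_eq add_0 le_zero_eq not_one_le_zero)
    have "\<exists>b. poly (g - [:c:]) b = 0 \<and> absv (b - a) < R"
    proof (rule ccontr)
      assume "\<not> ?thesis"
      then have farc: "\<forall>s. poly (g - [:c:]) s = 0 \<longrightarrow> absv (s - a) \<ge> R" by force
      have "\<eta> (g - [:c:]) = absv (poly (g - [:c:]) a)" by (rule far_const[OF na ac eA etaR gcnz farc])
      also have "\<dots> = absv (c - poly g a)" using na_commute[OF na] by simp
      finally show False using ec gac cl by simp
    qed
    then obtain b where b: "poly g b = c" "absv (b - a) < R" by auto
    have "\<eta> (g - [:c:]) = C * \<eta> [:-b,1:]" using sc[OF eA etaR b(2)] b(1) by simp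
    then have "C * \<eta> [:-b,1:] < C * \<delta>" using ec c by simp
    then have "\<eta> [:-b,1:] < \<delta>" using C1 by simp
    then show ?thesis using low[of b] by simp
  qed
qed




lemma ph_bound:
  fixes absv :: "'k::field_char_0 \<Rightarrow> real"
  assumes na: "nonarch_abs absv" and ph: "\<phi> \<in> berkA1 absv" and B: "\<phi> [:0,1:] \<le> B"
  shows "\<phi> p \<le> (\<Sum>i\<le>degree p. absv (coeff p i) * B ^ i)"
proof -
  have "\<phi> p = \<phi> (\<Sum>i\<le>degree p. monom (coeff p i) i)" by (simp only: poly_as_sum_of_monoms)
  also have "\<dots> \<le> (\<Sum>i\<le>degree p. \<phi> (monom (coeff p i) i))" by (rule ph_sum[OF na ph]) simp
  also have "\<dots> \<le> (\<Sum>i\<le>degree p. absv (coeff p i) * B ^ i)"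
  proof (rule sum_mono)
    fix i
    have "\<phi> (monom (coeff p i) i) = absv (coeff p i) * \<phi> [:0,1:] ^ i"
      by (simp only: monom_altdef ph_smult[OF na ph] ph_power[OF na ph])
    also have "\<dots> \<le> absv (coeff p i) * B ^ i"
      using B ph_nonneg[OF na ph] na_props(1)[OF na] by (intro mult_left_mono power_mono) auto
    finally show "\<phi> (monom (coeff p i) i) \<le> absv (coeff p i) * B ^ i" .
  qed
  finally show ?thesis .
qed

lemma in_filled:
  fixes absv :: "'k::field_char_0 \<Rightarrow> real"
  assumes na: "nonarch_abs absv" and ph: "\<phi> \<in> berkA1 absv" and m: "m > 0"
    and inv: "\<And>k. push (fiter f (n + k*m)) \<phi> [:-a,1:] < R"
  shows "\<phi> \<in> filled_julia absv f"
proof -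
  define B where "B = max R (absv a)"
  define Mx where "Mx = Max ((\<lambda>j. \<Sum>i\<le>degree (fiter f j). absv (coeff (fiter f j) i) * B ^ i) ` {..<m})"
  have bnd: "push (fiter f N) \<phi> [:0,1:] \<le> Mx" if N: "N \<ge> n" for N
  proof -
    define k where "k = (N - n) div m"
    define j where "j = (N - n) mod m"
    have Nkj: "N = (n + k*m) + j" unfolding k_def j_def using N by simp
    have jm: "j < m" unfolding j_def using m by simp
    define \<psi> where "\<psi> = push (fiter f (n + k*m)) \<phi>"
    have psA: "\<psi> \<in> berkA1 absv" unfolding \<psi>_def by (rule push_berkA1[OF ph])
    have "\<psi> [:0,1:] = \<psi> ([:-a,1:] + [:a:])" by simp
    also have "\<dots> \<le> max (\<psi> [:-a,1:]) (\<psi> [:a:])" by (rule ph_ultra[OF na psA])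
    also have "\<dots> \<le> B" unfolding B_def using inv[of k] ph_const[OF na psA] by (auto simp: \<psi>_def)
    finally have psB: "\<psi> [:0,1:] \<le> B" .
    have "push (fiter f N) \<phi> [:0,1:] = push (fiter f j) \<psi> [:0,1:]"
      unfolding Nkj \<psi>_def by (simp only: push_fiter_add)
    also have "\<dots> = \<psi> (fiter f j)" by (simp add: push_apply pcompose_X)
    also have "\<dots> \<le> (\<Sum>i\<le>degree (fiter f j). absv (coeff (fiter f j) i) * B ^ i)"
      by (rule ph_bound[OF na psA psB])
    also have "\<dots> \<le> Mx" unfolding Mx_def using jm by (intro Max_ge) auto
    finally show ?thesis .
  qed
  have "\<not> filterlim (\<lambda>N. push (fiter f N) \<phi> [:0, 1:]) at_top sequentially"
  proof
    assume "filterlim (\<lambda>N. push (fiter f N) \<phi> [:0, 1:]) at_top sequentially"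
    then have "eventually (\<lambda>N. Mx + 1 \<le> push (fiter f N) \<phi> [:0, 1:]) sequentially"
      unfolding filterlim_at_top by blast
    then obtain N0 where "\<And>N. N \<ge> N0 \<Longrightarrow> Mx + 1 \<le> push (fiter f N) \<phi> [:0, 1:]"
      unfolding eventually_sequentially by blast
    then have "Mx + 1 \<le> push (fiter f (max N0 n)) \<phi> [:0, 1:]" by simp
    then show False using bnd[of "max N0 n"] by simp
  qed
  then show ?thesis unfolding filled_julia_def using ph by simp
qed




theorem lemma2p2:
  fixes absv :: "'k::field_char_0 \<Rightarrow> real" and f :: "'k poly"
  assumes "nonarch_field absv"
    and "degree f \<ge> 2"
    and "\<forall>\<xi>. \<not> wandering absv f \<xi>"
  shows "\<forall>\<xi> \<in> julia absv f \<inter> berkH1 absv.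
           \<exists>n. repelling_periodic absv f (push (fiter f n) \<xi>)"
proof
  fix \<xi> assume xi: "\<xi> \<in> julia absv f \<inter> berkH1 absv"
  have na: "nonarch_abs absv" and ac: "alg_closed TYPE('k)" and comp: "complete_abs absv"
    using assms(1) unfolding nonarch_field_def by auto
  have dgk: "degree (fiter f k) \<ge> 1" for k
    using assms(2) by (simp add: degree_fiter one_le_power)
  have xiA: "\<xi> \<in> berkA1 absv" using xi unfolding berkH1_def by auto
  have "eventually_periodic f \<xi>" using assms(3) xi unfolding wandering_def by auto
  then obtain n m where m: "m > 0" and nm: "push (fiter f (n + m)) \<xi> = push (fiter f n) \<xi>"
    unfolding eventually_periodic_def by blast
  define \<eta> where "\<eta> = push (fiter f n) \<xi>"
  have fixm: "push (fiter f m) \<eta> = \<eta>" using nm unfolding \<eta>_def by (simp only: push_fiter_add)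
  have eH: "\<eta> \<in> berkH1 absv" unfolding \<eta>_def using push_H1[OF na ac _ dgk] xi by blast
  have eA: "\<eta> \<in> berkA1 absv" using eH unfolding berkH1_def by auto
  have pex: "\<exists>m>0. push (fiter f m) \<eta> = \<eta>" using m fixm by blast
  define p where "p = period f \<eta>"
  have pp: "p > 0 \<and> push (fiter f p) \<eta> = \<eta>"
    unfolding p_def period_def using pex by (rule LeastI_ex)
  have "loc_deg absv (fiter f p) \<eta> > 1"
  proof (rule ccontr)
    assume "\<not> ?thesis"
    then have ld: "loc_deg absv (fiter f p) \<eta> \<le> 1" by simp
    define D where "D = {disk_deg absv (fiter f p) a t | a t. t > 0 \<and> \<eta> [:- a, 1:] \<le> t}"
    have "\<eta> [:-0,1:] \<le> \<eta> [:0,1:] + 1" "\<eta> [:0,1:] + 1 > 0"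
      using ph_nonneg[OF na eA, of "[:0,1:]"] by simp_all
    then have "\<exists>a t. disk_deg absv (fiter f p) 0 (\<eta> [:0,1:] + 1) = disk_deg absv (fiter f p) a t
       \<and> t > 0 \<and> \<eta> [:- a, 1:] \<le> t"
      by (intro exI[of _ 0] exI[of _ "\<eta> [:0,1:] + 1"] conjI refl)
    then have "disk_deg absv (fiter f p) 0 (\<eta> [:0,1:] + 1) \<in> D"
      unfolding D_def by (simp only: mem_Collect_eq)
    then have "D \<noteq> {}" by blast
    then have "Inf D \<in> D" by (rule Inf_nat_def1)
    then have "\<exists>a t. Inf D = disk_deg absv (fiter f p) a t \<and> t > 0 \<and> \<eta> [:- a, 1:] \<le> t"
      unfolding D_def by (simp only: mem_Collect_eq)
    moreover have "loc_deg absv (fiter f p) \<eta> = Inf D" unfolding loc_deg_def D_def by (rule refl)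
    ultimately obtain a t where t0: "t > 0" and et: "\<eta> [:-a,1:] \<le> t"
      and dd0: "loc_deg absv (fiter f p) \<eta> = disk_deg absv (fiter f p) a t"
      by metis
    have dd: "disk_deg absv (fiter f p) a t \<le> 1" using dd0 ld by simp
    obtain R where eR: "\<eta> [:-a,1:] < R"
      and inv: "\<forall>\<phi>\<in>berkA1 absv. \<phi> [:-a,1:] < R \<longrightarrow> push (fiter f p) \<phi> [:-a,1:] < R"
      using local_inv[OF na ac comp dgk eH pp[THEN conjunct2] t0 et dd] by blast
    define U where "U = berkA1 absv \<inter> {\<phi>. \<phi> (pcompose [:-a,1:] (fiter f n)) \<in> {..<R}}"
    have Uo: "openin (berk_top absv) U"
      unfolding U_def berk_top_def
      by (intro openin_subtopology_Int2 topology_generated_by_Basis) (use open_lessThan[of R] in blast)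
    have "U \<subseteq> filled_julia absv f"
    proof
      fix \<phi> assume phU: "\<phi> \<in> U"
      then have phA: "\<phi> \<in> berkA1 absv" unfolding U_def by auto
      have "push (fiter f (n + k*p)) \<phi> [:-a,1:] < R" for k
      proof (induction k)
        case 0 then show ?case using phU unfolding U_def by (simp add: push_apply)
      next
        case (Suc k)
        have "push (fiter f (n + Suc k * p)) \<phi> = push (fiter f p) (push (fiter f (n + k*p)) \<phi>)"
          by (simp only: push_fiter_add[symmetric]) (simp add: algebra_simps)
        then show ?case using inv push_berkA1[OF phA] Suc by simp
      qed
      then show "\<phi> \<in> filled_julia absv f" using in_filled[OF na phA] pp by blast
    qed
    then have "U \<subseteq> berk_top absv interior_of filled_julia absv f"
      using Uo by (rule interior_of_maximal)
    moreover have "\<xi> \<in> U" unfolding U_def using xiA eR by (simp add: \<eta>_def push_apply)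
    ultimately show False using xi unfolding julia_def frontier_of_def by auto
  qed
  then have "repelling_periodic absv f \<eta>"
    unfolding repelling_periodic_def using eH pex p_def by blast
  then show "\<exists>n. repelling_periodic absv f (push (fiter f n) \<xi>)" unfolding \<eta>_def by blast
qed


end
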